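(* Fix $i\in\{1,\dots,d\}$ and let $0\le\alpha\le 1/h_i$ and $0\le\beta\le 2/h_i-\alpha$. Then for all $n\ge1$, $$(\eta_n^i)^2\le\min\Big\{\frac{2(\eta_1^i)^2}{\alpha h_i},\ \frac{8(\eta_1^i)^2\,n}{(\alpha+\beta)h_i},\ \frac{16(\eta_1^i)^2}{(\alpha+\beta)^2h_i^2}\Big\},$$ where a term with zero denominator is interpreted as $+\infty$.
   Context: Let $H\in\mathbb{R}^{d\times d}$ be symmetric positive definite with eigenvalues $h_1\le\dots\le h_d$ (all $>0$) and orthonormal eigenvectors $p_1,\dots,p_d$. Let $q\in\mathbb{R}^d$, $\theta_*=H^{-1}q$. For parameters $\alpha,\beta$, given $\theta_0$, set $\theta_1=\theta_0$ and for $n\ge1$ $\theta_{n+1}=\frac{2n}{n+1}\theta_n-\frac{n-1}{n+1}\theta_{n-1}-\frac{1}{n+1}\big(n(\alpha+\beta)H(\theta_n-\theta_* )-(n-1)\beta H(\theta_{n-1}-\theta_* )\big)$. Let $\eta_n=n(\theta_n-\theta_* )$, so that $\eta_0=0$, $\eta_1=\theta_0-\theta_*$ and $\eta_{n+1}=(I-\alpha H)\eta_n+(I-\beta H)(\eta_n-\eta_{n-1})$; write $\eta_n^i=p_i^\top\eta_n$. *)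

theory Defs
  imports "HOL-Analysis.Analysis"
begin

definition theta_star :: "real^'d^'d \<Rightarrow> real^'d \<Rightarrow> real^'d" where
  "theta_star H q = matrix_inv H *v q"

fun nag_theta :: "real^'d^'d \<Rightarrow> real^'d \<Rightarrow> real \<Rightarrow> real \<Rightarrow> real^'d \<Rightarrow> nat \<Rightarrow> real^'d" where
  "nag_theta H q \<alpha> \<beta> \<theta>0 0 = \<theta>0"
| "nag_theta H q \<alpha> \<beta> \<theta>0 (Suc 0) = \<theta>0"
| "nag_theta H q \<alpha> \<beta> \<theta>0 (Suc (Suc n)) =
     (let m = real (Suc n);
          ts = theta_star H q;
          a = nag_theta H q \<alpha> \<beta> \<theta>0 (Suc n);
          b = nag_theta H q \<alpha> \<beta> \<theta>0 n
      in (2 * m / (m + 1)) *\<^sub>R a - ((m - 1) / (m + 1)) *\<^sub>R b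
         - (1 / (m + 1)) *\<^sub>R ((m * (\<alpha> + \<beta>)) *\<^sub>R (H *v (a - ts))
                                 - ((m - 1) * \<beta>) *\<^sub>R (H *v (b - ts))))"

definition nag_eta :: "real^'d^'d \<Rightarrow> real^'d \<Rightarrow> real \<Rightarrow> real \<Rightarrow> real^'d \<Rightarrow> nat \<Rightarrow> real^'d" where
  "nag_eta H q \<alpha> \<beta> \<theta>0 n = real n *\<^sub>R (nag_theta H q \<alpha> \<beta> \<theta>0 n - theta_star H q)"

end

theory Submission
  imports Defs
begin

fun rs :: "'a::comm_ring_1 \<Rightarrow> 'a \<Rightarrow> nat \<Rightarrow> 'a" where
  "rs r1 r2 0 = 0"
| "rs r1 r2 (Suc n) = r2 * rs r1 r2 n + r1 ^ n"

lemma rs_rec: "rs r1 r2 (Suc (Suc n)) = (r1 + r2) * rs r1 r2 (Suc n) - r1 * r2 * rs r1 r2 n"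
proof -
  have "rs r1 r2 (Suc (Suc n)) = r2 * rs r1 r2 (Suc n) + r1 * r1 ^ n" by simp
  also have "\<dots> = r2 * rs r1 r2 (Suc n) + r1 * (rs r1 r2 (Suc n) - r2 * rs r1 r2 n)" by simp
  finally show ?thesis by (simp add: algebra_simps)
qed

lemma rs_rep:
  fixes Y :: "nat \<Rightarrow> 'a::comm_ring_1"
  assumes "Y 0 = 0" "Y 1 = c" "\<And>n. Y (Suc (Suc n)) = (r1 + r2) * Y (Suc n) - r1 * r2 * Y n"
  shows "Y n = c * rs r1 r2 n"
proof -
  have "Y n = c * rs r1 r2 n \<and> Y (Suc n) = c * rs r1 r2 (Suc n)"
  proof (induction n)
    case 0 then show ?case using assms by simp
  next
    case (Suc n)
    then show ?case using assms(3)[of n] rs_rec[of r1 r2 n] by (simp add: algebra_simps)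
  qed
  then show ?thesis by simp
qed

lemma rs_norm:
  fixes r1 r2 :: "'a::real_normed_field"
  assumes "norm r1 \<le> 1" "norm r2 \<le> 1"
  shows "norm (rs r1 r2 n) \<le> real n"
proof (induction n)
  case 0 then show ?case by simp
next
  case (Suc n)
  have "norm (rs r1 r2 (Suc n)) = norm (r2 * rs r1 r2 n + r1 ^ n)" by simp
  also have "\<dots> \<le> norm (r2 * rs r1 r2 n) + norm (r1 ^ n)" by (rule norm_triangle_ineq)
  also have "\<dots> = norm r2 * norm (rs r1 r2 n) + norm r1 ^ n" by (simp add: norm_mult norm_power)
  also have "\<dots> \<le> 1 * real n + 1"
    by (intro add_mono mult_mono Suc power_le_one) (use assms in auto)
  finally show ?case by simp
qed

lemma rs_pos_case:
  fixes r1 r2 :: real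
  assumes "0 \<le> r2" "r2 \<le> r1" "r1 \<le> 1"
  shows "0 \<le> rs r1 r2 n \<and> (1 - r2) * rs r1 r2 n \<le> 1"
proof (induction n)
  case 0 then show ?case by simp
next
  case (Suc n)
  have p: "r1 ^ n \<le> 1" "0 \<le> r1 ^ n" using assms by (auto intro: power_le_one)
  have "(1 - r2) * rs r1 r2 (Suc n) = r2 * ((1 - r2) * rs r1 r2 n) + (1 - r2) * r1 ^ n"
    by (simp add: algebra_simps)
  also have "\<dots> \<le> r2 * 1 + (1 - r2) * 1"
    by (intro add_mono mult_left_mono) (use Suc assms p in auto)
  finally show ?case using Suc assms p by simp
qed

lemma rs_neg_case:
  fixes r1 r2 :: real
  assumes "r2 \<le> 0" "0 \<le> r1 + r2" "r1 \<le> 1"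
  shows "0 \<le> rs r1 r2 (Suc n) \<and> rs r1 r2 (Suc n) \<le> r1 ^ n"
proof (induction n)
  case 0 then show ?case by simp
next
  case (Suc n)
  have r1: "0 \<le> r1" using assms by simp
  have "r2 * rs r1 r2 (Suc n) \<ge> r2 * r1 ^ n"
    using Suc assms by (simp add: mult_left_mono_neg)
  moreover have "r2 * rs r1 r2 (Suc n) \<le> 0"
    using Suc assms by (simp add: mult_nonpos_nonneg)
  moreover have "r2 * r1 ^ n + r1 ^ Suc n = (r1 + r2) * r1 ^ n" by (simp add: algebra_simps)
  moreover have "(r1 + r2) * r1 ^ n \<ge> 0" using assms r1 by simp
  ultimately show ?case by (simp only: rs.simps) linarith
qed

context
  fixes X :: "nat \<Rightarrow> real" and a b c :: real
  assumes X0: "X 0 = 0" and X1: "X 1 = c"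
    and rec: "\<And>n. X (Suc (Suc n)) = (2 - a - b) * X (Suc n) - (1 - b) * X n"
    and a0: "0 \<le> a" and a1: "a \<le> 1" and b0: "0 \<le> b" and b1: "b \<le> 2 - a"
begin

lemma F1_big:
  assumes ba: "a / 2 \<le> b"
  shows "a * X (Suc k) ^ 2 \<le> 2 * c ^ 2"
proof -
  define p where "p = 1 - a / 2"
  define E where "E k = a * X (Suc k) ^ 2 + p * (X (Suc k) - X k) ^ 2" for k
  have pp: "0 < p" using a1 by (simp add: p_def)
  have pt: "0 \<le> p ^ 2 - (1 - b) ^ 2"
  proof -
    have "1 - b \<le> p" "b - 1 \<le> p" using ba b1 a0 by (auto simp: p_def)
    then have "0 \<le> (p - (1 - b)) * (p + (1 - b))" by simp
    then show ?thesis by (simp add: power2_eq_square algebra_simps)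
  qed
  have step: "E (Suc k) \<le> E k" for k
  proof -
    define u where "u = X (Suc k)"
    define v where "v = X (Suc k) - X k"
    have x2: "X (Suc (Suc k)) = u + (1 - b) * v - a * u" using rec[of k] by (simp add: u_def v_def algebra_simps)
    have ek: "E k = a * u ^ 2 + p * v ^ 2" by (simp add: E_def u_def v_def)
    have es: "E (Suc k) = a * (u + (1 - b) * v - a * u) ^ 2 + p * ((1 - b) * v - a * u) ^ 2"
      by (simp add: E_def x2 u_def)
    have id: "p * (E k - E (Suc k)) = a ^ 2 * (p * u + (1 - b) * v / 2) ^ 2 + (p ^ 2 - (1 - b) ^ 2) * v ^ 2"
      unfolding ek es p_def by (simp add: power2_eq_square field_simps)
    have "0 \<le> a ^ 2 * (p * u + (1 - b) * v / 2) ^ 2 + (p ^ 2 - (1 - b) ^ 2) * v ^ 2"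
      using pt by simp
    then have "0 \<le> p * (E k - E (Suc k))" using id by simp
    then show ?thesis using pp by (simp add: zero_le_mult_iff)
  qed
  have "E k \<le> E 0"
    by (induction k) (use step order_trans in blast)+
  moreover have "E 0 = (a + p) * c ^ 2" using X0 X1 by (simp add: E_def algebra_simps)
  moreover have "a * X (Suc k) ^ 2 \<le> E k" using pp by (simp add: E_def)
  moreover have "(a + p) * c ^ 2 \<le> 2 * c ^ 2" using a1 by (intro mult_right_mono) (auto simp: p_def)
  ultimately show ?thesis by linarith
qed

lemma F1_small:
  assumes ba: "b < a / 2"
  shows "a * X (Suc k) ^ 2 \<le> 2 * c ^ 2"
proof -
  define t where "t = 1 - b"
  define Q where "Q k = a * X (Suc k) ^ 2 + (b - a) * X (Suc k) * (X (Suc k) - X k) + t * (X (Suc k) - X k) ^ 2" for k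
  have t0: "0 < t" "t \<le> 1" using ba b0 a1 by (auto simp: t_def)
  have step: "Q (Suc k) = t * Q k" for k
  proof -
    define u where "u = X (Suc k)"
    define v where "v = X (Suc k) - X k"
    have x2: "X (Suc (Suc k)) = u + t * v - a * u" using rec[of k] by (simp add: u_def v_def t_def algebra_simps)
    have xk: "X k = u - v" by (simp add: u_def v_def)
    have "Q (Suc k) = a*(u + t* v - a*u)^2 + (b-a)*(u + t* v - a*u)*(t* v - a*u) + t*(t* v-a*u)^2"
      by (simp add: Q_def x2 u_def[symmetric])
    also have "\<dots> = t * (a*u^2 + (b-a)*u* v + t* v^2)" by (simp add: t_def) algebra
    also have "a*u^2 + (b-a)*u* v + t* v^2 = Q k" by (simp add: Q_def u_def v_def)
    finally show ?thesis .
  qed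
  have qk: "Q k = t ^ k * c ^ 2" for k
  proof (induction k)
    case 0 show ?case using X0 X1 by (simp add: Q_def t_def power2_eq_square algebra_simps)
  next
    case (Suc k) then show ?case by (simp add: step)
  qed
  have "Q k \<le> c ^ 2" unfolding qk using t0 by (simp add: mult_left_le_one_le power_le_one)
  moreover have "a / 2 * X (Suc k) ^ 2 \<le> Q k"
  proof -
    define u where "u = X (Suc k)"
    define v where "v = X (Suc k) - X k"
    have h1: "(b - a) ^ 2 \<le> 2 * a * t"
    proof -
      have "(b - a) ^ 2 \<le> a ^ 2" using ba b0 by (simp add: abs_le_square_iff[symmetric]) 
      also have "a ^ 2 \<le> a" using a0 a1 by (simp add: power2_eq_square mult_left_le_one_le)
      also have "a \<le> 2 * a * t" using mult_nonneg_nonneg[of a "1-2*b"] a0 ba a1 by (simp add: t_def algebra_simps)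
      finally show ?thesis .
    qed
    have id: "4 * t * (Q k - a / 2 * u ^ 2) = (2 * t * v + (b - a) * u) ^ 2 + (2 * a * t - (b - a) ^ 2) * u ^ 2"
    proof -
      have "Q k = a*u^2 + (b-a)*u* v + t* v^2" by (simp add: Q_def u_def v_def)
      then show ?thesis by (simp add: power2_eq_square) (simp add: field_simps)
    qed
    have "0 \<le> (2 * a * t - (b - a) ^ 2) * u ^ 2" using h1 by simp
    then have "0 \<le> 4 * t * (Q k - a / 2 * u ^ 2)" using id by (metis add_nonneg_nonneg zero_le_power2)
    then show ?thesis using t0 by (simp add: zero_le_mult_iff u_def)
  qed
  ultimately show ?thesis by linarith
qed

lemma F1: "a * X (Suc k) ^ 2 \<le> 2 * c ^ 2"
  using F1_big F1_small by (cases "a / 2 \<le> b") auto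


lemma F_real:
  assumes disc: "4 * a \<le> (a + b) ^ 2"
  shows "\<bar>X n\<bar> \<le> real n * \<bar>c\<bar> \<and> (a + b) * \<bar>X n\<bar> \<le> 2 * \<bar>c\<bar>"
proof -
  define w where "w = sqrt ((a + b) ^ 2 - 4 * a)"
  define r1 where "r1 = (2 - a - b + w) / 2"
  define r2 where "r2 = (2 - a - b - w) / 2"
  have w0: "0 \<le> w" using disc by (simp add: w_def)
  have w2: "w ^ 2 = (a + b) ^ 2 - 4 * a" using disc by (simp add: w_def)
  have wle: "w \<le> a + b"
    by (rule power2_le_imp_le) (use w2 a0 b0 in auto)
  have wle2: "w \<le> 4 - a - b"
  proof (rule power2_le_imp_le)
    have "(4 - a - b) ^ 2 - w ^ 2 = 16 - 4 * a - 8 * b" unfolding w2 by (simp add: power2_eq_square algebra_simps)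
    then show "w ^ 2 \<le> (4 - a - b) ^ 2" using b1 a0 by linarith
  qed (use b1 a1 in auto)
  have sum: "r1 + r2 = 2 - a - b" by (simp add: r1_def r2_def field_simps)
  have prod: "r1 * r2 = 1 - b"
  proof -
    have "r1 * r2 = ((2 - a - b) ^ 2 - w ^ 2) / 4" by (simp add: r1_def r2_def power2_eq_square field_simps)
    also have "\<dots> = 1 - b" unfolding w2 by (simp add: power2_eq_square field_simps)
    finally show ?thesis .
  qed
  have rep: "X n = c * rs r1 r2 n" for n
    by (rule rs_rep[where Y = X]) (use X0 X1 rec sum prod in auto)
  have r1b: "0 \<le> r1" "r1 \<le> 1" using w0 wle b1 by (auto simp: r1_def)
  have r2b: "-1 \<le> r2" "r2 \<le> r1" "0 \<le> r1 + r2" using wle2 w0 b1 sum by (auto simp: r1_def r2_def)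
  have F0: "\<bar>X n\<bar> \<le> real n * \<bar>c\<bar>"
  proof -
    have "norm (rs r1 r2 n) \<le> real n" by (rule rs_norm) (use r1b r2b in auto)
    then show ?thesis unfolding rep by (simp add: abs_mult mult.commute mult_left_mono)
  qed
  have rsb: "0 \<le> rs r1 r2 n \<and> (a + b) * rs r1 r2 n \<le> 2"
  proof (cases "0 \<le> r2")
    case True
    have h: "0 \<le> rs r1 r2 n \<and> (1 - r2) * rs r1 r2 n \<le> 1" by (rule rs_pos_case) (use True r1b r2b in auto)
    have "(a + b) / 2 \<le> 1 - r2" using w0 by (simp add: r2_def field_simps)
    then have "(a + b) / 2 * rs r1 r2 n \<le> (1 - r2) * rs r1 r2 n" using h by (intro mult_right_mono) auto
    then show ?thesis using h by simp
  next
    case False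
    have "0 \<le> rs r1 r2 n \<and> rs r1 r2 n \<le> 1"
    proof (cases n)
      case 0 then show ?thesis by simp
    next
      case (Suc m)
      have "0 \<le> rs r1 r2 (Suc m) \<and> rs r1 r2 (Suc m) \<le> r1 ^ m"
        by (rule rs_neg_case) (use False r1b(2) r2b(3) in linarith)+
      moreover have "r1 ^ m \<le> 1" using r1b by (simp add: power_le_one)
      ultimately show ?thesis using Suc by simp
    qed
    moreover have "a + b \<le> 2" using b1 by simp
    ultimately show ?thesis using mult_mono[of "a+b" 2 "rs r1 r2 n" 1] a0 b0 by auto
  qed
  have "\<bar>X n\<bar> = \<bar>c\<bar> * rs r1 r2 n" using rsb rep[of n] by (simp add: abs_mult)
  then have "(a + b) * \<bar>X n\<bar> = \<bar>c\<bar> * ((a + b) * rs r1 r2 n)" by simp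
  also have "\<dots> \<le> \<bar>c\<bar> * 2" using rsb by (simp add: mult_left_mono)
  finally show ?thesis using F0 by simp
qed

lemma F_complex:
  assumes disc: "(a + b) ^ 2 < 4 * a"
  shows "\<bar>X n\<bar> \<le> real n * \<bar>c\<bar>"
proof -
  define w where "w = sqrt (4 * a - (a + b) ^ 2)"
  define r1 where "r1 = Complex ((2 - a - b) / 2) (w / 2)"
  define r2 where "r2 = cnj r1"
  have w2: "w ^ 2 = 4 * a - (a + b) ^ 2" using disc by (simp add: w_def)
  have bl: "b \<le> 1"
  proof (rule ccontr)
    assume "\<not> b \<le> 1"
    then have "(a + 1) ^ 2 \<le> (a + b) ^ 2" using a0 by (intro power_mono) auto
    moreover have "4 * a \<le> (a + 1) ^ 2" using zero_le_power2[of "a - 1"] by (simp add: power2_eq_square algebra_simps)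
    ultimately show False using disc by linarith
  qed
  have nsq: "((2 - a - b) / 2) ^ 2 + (w / 2) ^ 2 = 1 - b"
    unfolding power_divide w2 by (simp add: power2_eq_square field_simps)
  have sum: "r1 + r2 = complex_of_real (2 - a - b)" by (simp add: r1_def r2_def complex_eq_iff)
  have prod: "r1 * r2 = complex_of_real (1 - b)"
    using nsq by (simp add: r1_def r2_def complex_eq_iff power2_eq_square)
  define Y where "Y n = complex_of_real (X n)" for n
  have rep: "Y n = complex_of_real c * rs r1 r2 n" for n
  proof (rule rs_rep[where Y = Y])
    show "Y 0 = 0" "Y 1 = complex_of_real c" using X0 X1 by (auto simp: Y_def)
    fix n show "Y (Suc (Suc n)) = (r1 + r2) * Y (Suc n) - r1 * r2 * Y n"
      unfolding sum prod Y_def rec[of n] by simp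
  qed
  have nr: "norm r1 \<le> 1" "norm r2 \<le> 1"
    using nsq b0 bl by (auto simp: r1_def r2_def complex_norm)
  have "norm (rs r1 r2 n) \<le> real n" by (rule rs_norm) (use nr in auto)
  moreover have "\<bar>X n\<bar> = \<bar>c\<bar> * norm (rs r1 r2 n)"
    using arg_cong[OF rep[of n], of norm] by (simp add: Y_def norm_mult)
  ultimately show ?thesis by (simp add: mult.commute mult_left_mono)
qed

lemma scalar_main:
  assumes n1: "1 \<le> n"
  shows "(0 < a \<longrightarrow> X n ^ 2 \<le> 2 * c ^ 2 / a)
       \<and> (0 < a + b \<longrightarrow> X n ^ 2 \<le> 8 * c ^ 2 * real n / (a + b))
       \<and> (0 < a + b \<longrightarrow> X n ^ 2 \<le> 16 * c ^ 2 / (a + b) ^ 2)"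
proof -
  obtain k where nk: "n = Suc k" using n1 by (cases n) auto
  have f1: "a * X n ^ 2 \<le> 2 * c ^ 2" using F1[of k] nk by simp
  have f0: "\<bar>X n\<bar> \<le> real n * \<bar>c\<bar>"
    using F_real F_complex by (cases "4 * a \<le> (a + b) ^ 2") auto
  have f3: "(a + b) * \<bar>X n\<bar> \<le> 4 * \<bar>c\<bar>"
  proof (cases "4 * a \<le> (a + b) ^ 2")
    case True
    then have "(a + b) * \<bar>X n\<bar> \<le> 2 * \<bar>c\<bar>" using F_real by blast
    then show ?thesis by simp
  next
    case False
    then have d: "(a + b) ^ 2 < 4 * a" by simp
    have "((a + b) * \<bar>X n\<bar>) ^ 2 = (a + b) ^ 2 * X n ^ 2" by (simp add: power_mult_distrib)
    also have "\<dots> \<le> (4 * a) * X n ^ 2" using d by (intro mult_right_mono) auto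
    also have "\<dots> \<le> 4 * (2 * c ^ 2)" using f1 by simp
    also have "\<dots> \<le> (4 * \<bar>c\<bar>) ^ 2" by (simp add: power2_eq_square)
    finally show ?thesis by (rule power2_le_imp_le) simp
  qed
  have g1: "0 < a \<longrightarrow> X n ^ 2 \<le> 2 * c ^ 2 / a"
    using f1 by (simp add: pos_le_divide_eq mult.commute)
  have g3: "0 < a + b \<longrightarrow> X n ^ 2 \<le> 16 * c ^ 2 / (a + b) ^ 2"
  proof
    assume p: "0 < a + b"
    have "((a + b) * \<bar>X n\<bar>) ^ 2 \<le> (4 * \<bar>c\<bar>) ^ 2"
      using f3 p by (intro power_mono) auto
    then have "X n ^ 2 * (a + b) ^ 2 \<le> 16 * c ^ 2" by (simp add: power_mult_distrib mult.commute)
    then show "X n ^ 2 \<le> 16 * c ^ 2 / (a + b) ^ 2" using p by (simp add: pos_le_divide_eq)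
  qed
  have g2: "0 < a + b \<longrightarrow> X n ^ 2 \<le> 8 * c ^ 2 * real n / (a + b)"
  proof
    assume p: "0 < a + b"
    have "(a + b) * X n ^ 2 = \<bar>X n\<bar> * ((a + b) * \<bar>X n\<bar>)" by (simp add: power2_eq_square)
    also have "\<dots> \<le> (real n * \<bar>c\<bar>) * (4 * \<bar>c\<bar>)"
      by (rule mult_mono[OF f0 f3]) (use p in auto)
    also have "\<dots> = 4 * real n * (\<bar>c\<bar> * \<bar>c\<bar>)" by (simp add: algebra_simps)
    also have "\<dots> = 4 * c ^ 2 * real n" by (simp add: abs_mult_self_eq power2_eq_square)
    also have "\<dots> \<le> 8 * c ^ 2 * real n" by simp
    finally show "X n ^ 2 \<le> 8 * c ^ 2 * real n / (a + b)" using p by (simp add: pos_le_divide_eq mult.commute)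
  qed
  show ?thesis using g1 g2 g3 by blast
qed
end

lemma proj_H:
  fixes H :: "real^'d^'d" and v w :: "real^'d" and hh :: real
  assumes "transpose H = H" "H *v w = hh *\<^sub>R w"
  shows "w \<bullet> (H *v v) = hh * (w \<bullet> v)"
proof -
  have "w \<bullet> (H *v v) = (w v* H) \<bullet> v" by (simp add: dot_lmul_matrix)
  also have "w v* H = transpose H *v w" by simp
  also have "\<dots> = hh *\<^sub>R w" using assms by simp
  finally show ?thesis by simp
qed

theorem theorem2:
  fixes H :: "real^'d^'d" and q \<theta>0 :: "real^'d"
    and h :: "'d \<Rightarrow> real" and p :: "'d \<Rightarrow> real^'d"
    and \<alpha> \<beta> :: real and i :: 'd and n :: nat
  assumes symm: "transpose H = H"
    and posdef: "\<forall>x. x \<noteq> 0 \<longrightarrow> x \<bullet> (H *v x) > 0"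
    and eig: "\<forall>j. H *v p j = h j *\<^sub>R p j"
    and orthonormal: "\<forall>j k. p j \<bullet> p k = (if j = k then 1 else 0)"
    and \<alpha>0: "0 \<le> \<alpha>" and \<alpha>1: "\<alpha> \<le> 1 / h i"
    and \<beta>0: "0 \<le> \<beta>" and \<beta>1: "\<beta> \<le> 2 / h i - \<alpha>"
    and n1: "n \<ge> 1"
  shows "(\<alpha> * h i \<noteq> 0 \<longrightarrow>
           (p i \<bullet> nag_eta H q \<alpha> \<beta> \<theta>0 n)^2
             \<le> 2 * (p i \<bullet> nag_eta H q \<alpha> \<beta> \<theta>0 1)^2 / (\<alpha> * h i))
       \<and> ((\<alpha> + \<beta>) * h i \<noteq> 0 \<longrightarrow>
           (p i \<bullet> nag_eta H q \<alpha> \<beta> \<theta>0 n)^2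
             \<le> 8 * (p i \<bullet> nag_eta H q \<alpha> \<beta> \<theta>0 1)^2 * real n / ((\<alpha> + \<beta>) * h i))
       \<and> ((\<alpha> + \<beta>)^2 * (h i)^2 \<noteq> 0 \<longrightarrow>
           (p i \<bullet> nag_eta H q \<alpha> \<beta> \<theta>0 n)^2
             \<le> 16 * (p i \<bullet> nag_eta H q \<alpha> \<beta> \<theta>0 1)^2 / ((\<alpha> + \<beta>)^2 * (h i)^2))"
proof -
  define hi where "hi = h i"
  have pH: "p i \<bullet> (H *v v) = hi * (p i \<bullet> v)" for v
    using proj_H[OF symm] eig by (simp add: hi_def)
  have hpos: "0 < hi"
  proof -
    have pp: "p i \<bullet> p i = 1" using orthonormal by simp
    then have "p i \<noteq> 0" by auto
    then have "0 < p i \<bullet> (H *v p i)" using posdef by blast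
    then show ?thesis using pH[of "p i"] pp by simp
  qed
  define a where "a = \<alpha> * hi"
  define b where "b = \<beta> * hi"
  define X where "X k = p i \<bullet> nag_eta H q \<alpha> \<beta> \<theta>0 k" for k
  define T where "T k = p i \<bullet> nag_theta H q \<alpha> \<beta> \<theta>0 k" for k
  define S where "S = p i \<bullet> theta_star H q"
  have XT: "X k = real k * (T k - S)" for k
    by (simp add: X_def T_def S_def nag_eta_def inner_diff_right)
  have Trec: "T (Suc (Suc k)) = (2 * real (Suc k) / (real (Suc k) + 1)) * T (Suc k)
      - ((real (Suc k) - 1) / (real (Suc k) + 1)) * T k
      - (1 / (real (Suc k) + 1)) * ((real (Suc k) * (\<alpha> + \<beta>)) * (hi * (T (Suc k) - S))
          - ((real (Suc k) - 1) * \<beta>) * (hi * (T k - S)))" for k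
    by (simp add: T_def S_def Let_def inner_diff_right pH)
  have rec: "X (Suc (Suc k)) = (2 - a - b) * X (Suc k) - (1 - b) * X k" for k
  proof -
    define m where "m = real (Suc k)"
    have m0: "m + 1 > 0" by (simp add: m_def)
    define A where "A = 2 * m / (m + 1)"
    define B where "B = (m - 1) / (m + 1)"
    define C where "C = 1 / (m + 1)"
    define Z where "Z = (m * (\<alpha> + \<beta>)) * (hi * (T (Suc k) - S)) - ((m - 1) * \<beta>) * (hi * (T k - S))"
    have t2: "T (Suc (Suc k)) = A * T (Suc k) - B * T k - C * Z"
      using Trec[of k] unfolding A_def B_def C_def Z_def m_def by simp
    have eA: "(m + 1) * A = 2 * m" and eB: "(m + 1) * B = m - 1" and eC: "(m + 1) * C = 1"
      using m0 by (simp_all add: A_def B_def C_def)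
    have "(m + 1) * T (Suc (Suc k)) = ((m + 1) * A) * T (Suc k) - ((m + 1) * B) * T k - ((m + 1) * C) * Z"
      unfolding t2 by (simp add: algebra_simps)
    then have Trec': "(m + 1) * T (Suc (Suc k)) = 2 * m * T (Suc k) - (m - 1) * T k - Z"
      unfolding eA eB eC by simp
    have x2: "X (Suc (Suc k)) = (m + 1) * (T (Suc (Suc k)) - S)" by (simp add: XT m_def)
    have x1: "X (Suc k) = m * (T (Suc k) - S)" by (simp add: XT m_def)
    have x0: "X k = (m - 1) * (T k - S)" by (simp add: XT m_def)
    show ?thesis unfolding x2 x1 x0 a_def b_def using Trec'
      by (simp add: Z_def algebra_simps)
  qed
  have a0: "0 \<le> a" using \<alpha>0 hpos by (simp add: a_def)
  have a1: "a \<le> 1" using \<alpha>1 hpos by (simp add: a_def hi_def pos_le_divide_eq)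
  have b0: "0 \<le> b" using \<beta>0 hpos by (simp add: b_def)
  have b1: "b \<le> 2 - a"
  proof -
    have "\<beta> + \<alpha> \<le> 2 / hi" using \<beta>1 by (simp add: hi_def)
    then have "(\<beta> + \<alpha>) * hi \<le> 2" using hpos by (simp add: pos_le_divide_eq)
    then show ?thesis by (simp add: a_def b_def algebra_simps)
  qed
  have X0: "X 0 = 0" by (simp add: XT)
  have M: "(0 < a \<longrightarrow> X n ^ 2 \<le> 2 * X 1 ^ 2 / a)
       \<and> (0 < a + b \<longrightarrow> X n ^ 2 \<le> 8 * X 1 ^ 2 * real n / (a + b))
       \<and> (0 < a + b \<longrightarrow> X n ^ 2 \<le> 16 * X 1 ^ 2 / (a + b) ^ 2)"
    by (rule scalar_main[OF X0 refl rec a0 a1 b0 b1 n1])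
  have ab: "(\<alpha> + \<beta>) * h i = a + b" by (simp add: a_def b_def hi_def algebra_simps)
  have ab2: "(\<alpha> + \<beta>)^2 * (h i)^2 = (a + b)^2" by (simp add: ab[symmetric] power_mult_distrib)
  have ah: "\<alpha> * h i = a" by (simp add: a_def hi_def)
  have nz1: "a \<noteq> 0 \<Longrightarrow> 0 < a" using a0 by simp
  have nz2: "a + b \<noteq> 0 \<Longrightarrow> 0 < a + b" using a0 b0 by simp
  show ?thesis unfolding ab ab2 ah X_def[symmetric] using M nz1 nz2 by auto
qed

end
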